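(* Let $p\geq 3$ and $0\leq a,d\leq p-1$ be integers, let $m\geq 3$, and let $A$ be an $m$-rowed simple $(0,1,2)$-matrix with $F(a,p,p,d)\not\prec A$. Fix any choice of associated vectors for the pairs of rows of $A$ (as described in the context), and let $B$ and $T$ be the corresponding matrix of unmarked columns and directed graph. If $|B|>2^m+m2^{m-1}-2^{m-3}$, then $T$ is transitive, i.e. whenever $i\to j$ and $j\to k$ are edges of $T$ for distinct $i,j,k$, then $i\to k$ is also an edge of $T$.
   Context: A simple matrix has no repeated columns; $|A|$ is the number of columns. $F\prec A$ means some submatrix of $A$ is a row/column permutation of $F$. $F(a,b,c,d)$ is the 2-rowed $(0,1)$-matrix with $a$ columns $\binom00$, $b$ columns $\binom10$, $c$ columns $\binom01$, $d$ columns $\binom11$. Associated vectors: to each pair $1\leq i<j\leq m$ one associates a vector $\binom{x}{y}\in\{\binom00,\binom01,\binom10,\binom11\}$ such that: if $\binom xy\in\{\binom01,\binom10\}$, there are at most $p-1$ columns $v$ of $A$ with $(v_i,v_j)=(x,y)$; if $\binom xy=\binom00$, at most $a-1$ such columns; if $\binom xy=\binom11$, at most $d-1$ such columns (such a vector exists since $F(a,p,p,d)\not\prec A$; if several are possible one is chosen arbitrarily). A column $v$ has a mark at $(i,j)$ if $(v_i,v_j)$ equals the vector associated with $(i,j)$. $B$ is the submatrix of columns of $A$ with no mark. $T$ is the directed graph on $[m]$ which, for each $i<j$, has the edge $i\to j$ if $\binom01$ is associated with $(i,j)$, the edge $j\to i$ if $\binom10$ is associated with $(i,j)$, and no edge between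 $i,j$ otherwise. *)

theory Defs
  imports Main
begin

text \<open>Matrices are represented column-wise: a column with k rows is a list of
length k; rows are indexed 0..k-1. A simple matrix is a set of distinct columns.\<close>

definition col_matrix :: "nat \<Rightarrow> nat set \<Rightarrow> nat list set \<Rightarrow> bool" where
  "col_matrix m S A \<longleftrightarrow> finite A \<and> (\<forall>v\<in>A. length v = m \<and> set v \<subseteq> S)"

definition simple012 :: "nat \<Rightarrow> nat list set \<Rightarrow> bool" where
  "simple012 m A \<longleftrightarrow> col_matrix m {0,1,2} A"

definition Fmat :: "nat \<Rightarrow> nat \<Rightarrow> nat \<Rightarrow> nat \<Rightarrow> nat list list" where
  "Fmat a b c d = replicate a [0,0] @ replicate b [1,0] @ replicate c [0,1] @ replicate d [1,1]"

text \<open>Configuration: F (k-rowed, columns listed) \<prec> A (m-rowed simple): some submatrix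
of A (choice of k distinct rows and length F distinct columns) is a row/column
permutation of F.\<close>
definition config :: "nat \<Rightarrow> nat list list \<Rightarrow> nat \<Rightarrow> nat list set \<Rightarrow> bool" where
  "config k F m A \<longleftrightarrow>
     (\<exists>\<sigma>::nat\<Rightarrow>nat. \<exists>\<tau>::nat\<Rightarrow>nat list.
        inj_on \<sigma> {..<k} \<and> \<sigma> ` {..<k} \<subseteq> {..<m} \<and>
        inj_on \<tau> {..<length F} \<and> \<tau> ` {..<length F} \<subseteq> A \<and>
        (\<forall>c<length F. \<forall>r<k. \<tau> c ! (\<sigma> r) = F ! c ! r))"

definition pair_count :: "nat list set \<Rightarrow> nat \<Rightarrow> nat \<Rightarrow> nat \<times> nat \<Rightarrow> nat" where
  "pair_count A i j xy = card {v\<in>A. (v ! i, v ! j) = xy}"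

definition assoc_vectors ::
  "nat \<Rightarrow> nat \<Rightarrow> nat \<Rightarrow> nat \<Rightarrow> nat list set \<Rightarrow> (nat \<Rightarrow> nat \<Rightarrow> nat \<times> nat) \<Rightarrow> bool" where
  "assoc_vectors a p d m A assoc \<longleftrightarrow>
     (\<forall>i j. i < j \<and> j < m \<longrightarrow>
        assoc i j \<in> {(0,0),(0,1),(1,0),(1,1)} \<and>
        (assoc i j \<in> {(0,1),(1,0)} \<longrightarrow> int (pair_count A i j (assoc i j)) \<le> int p - 1) \<and>
        (assoc i j = (0,0) \<longrightarrow> int (pair_count A i j (assoc i j)) \<le> int a - 1) \<and>
        (assoc i j = (1,1) \<longrightarrow> int (pair_count A i j (assoc i j)) \<le> int d - 1))"

definition unmarked :: "nat \<Rightarrow> nat list set \<Rightarrow> (nat \<Rightarrow> nat \<Rightarrow> nat \<times> nat) \<Rightarrow> nat list set" where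
  "unmarked m A assoc = {v\<in>A. \<forall>i j. i < j \<and> j < m \<longrightarrow> (v ! i, v ! j) \<noteq> assoc i j}"

definition T_edge :: "nat \<Rightarrow> (nat \<Rightarrow> nat \<Rightarrow> nat \<times> nat) \<Rightarrow> nat \<Rightarrow> nat \<Rightarrow> bool" where
  "T_edge m assoc i j \<longleftrightarrow> i < m \<and> j < m \<and>
     ((i < j \<and> assoc i j = (0,1)) \<or> (j < i \<and> assoc j i = (1,0)))"

end

theory Submission
  imports Defs
begin


definition Rs :: "('c \<Rightarrow> nat \<Rightarrow> nat) \<Rightarrow> nat set \<Rightarrow> 'c \<Rightarrow> nat \<Rightarrow> nat" where
  "Rs val S v = (\<lambda>r. if r \<in> S then val v r else 0)"

definition good :: "'c set \<Rightarrow> ('c \<Rightarrow> nat \<Rightarrow> nat) \<Rightarrow> (nat \<Rightarrow> nat \<Rightarrow> nat \<times> nat) \<Rightarrow> nat set \<Rightarrow> bool" where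
  "good F val forb S \<longleftrightarrow> (\<forall>v\<in>F. \<forall>r\<in>S. val v r \<le> 1) \<and>
     (\<forall>q\<in>S. \<forall>r\<in>S. q \<noteq> r \<longrightarrow> fst (forb q r) \<le> 1 \<and> snd (forb q r) \<le> 1 \<and>
        (\<forall>v\<in>F. (val v q, val v r) \<noteq> forb q r))"

lemma good_mono: "good F val forb S \<Longrightarrow> S' \<subseteq> S \<Longrightarrow> good F val forb S'"
  unfolding good_def by blast

lemma step:
  assumes fin: "finite F" and g: "good F val forb (insert r S)" and rS: "r \<notin> S"
  shows "card (Rs val (insert r S) ` F) \<le> card (Rs val S ` F) + 1"
proof -
  let ?X = "Rs val (insert r S) ` F"
  let ?g = "\<lambda>w. w(r := 0)"
  define X0 where "X0 = {w\<in>?X. w r = 0}"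
  define X1 where "X1 = {w\<in>?X. w r = 1}"
  have finX: "finite ?X" using fin by simp
  have gX: "?g ` ?X = Rs val S ` F"
    using rS unfolding Rs_def by (auto simp: image_iff fun_eq_iff)
  have Xu: "?X = X0 \<union> X1"
    using g unfolding X0_def X1_def good_def Rs_def by fastforce
  have Xd: "X0 \<inter> X1 = {}" unfolding X0_def X1_def by auto
  have inj0: "inj_on ?g X0"
  proof (rule inj_onI)
    fix w w' assume a: "w \<in> X0" "w' \<in> X0" "w(r := 0) = w'(r := 0)"
    show "w = w'"
    proof
      fix x show "w x = w' x"
      proof (cases "x = r")
        case True then show ?thesis using a(1,2) unfolding X0_def by simp
      next
        case False then show ?thesis using fun_cong[OF a(3), of x] by simp
      qed
    qed
  qed
  have inj1: "inj_on ?g X1"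
  proof (rule inj_onI)
    fix w w' assume a: "w \<in> X1" "w' \<in> X1" "w(r := 0) = w'(r := 0)"
    show "w = w'"
    proof
      fix x show "w x = w' x"
      proof (cases "x = r")
        case True then show ?thesis using a(1,2) unfolding X1_def by simp
      next
        case False then show ?thesis using fun_cong[OF a(3), of x] by simp
      qed
    qed
  qed
  have f0: "finite X0" "finite X1" using finX Xu by auto
  have "card ?X = card X0 + card X1" using Xu Xd f0 card_Un_disjoint by metis
  also have "\<dots> = card (?g ` X0) + card (?g ` X1)" using inj0 inj1 by (simp add: card_image)
  also have "\<dots> = card (?g ` X0 \<union> ?g ` X1) + card (?g ` X0 \<inter> ?g ` X1)"
    using card_Un_Int f0 by blast
  also have "?g ` X0 \<union> ?g ` X1 = Rs val S ` F" using gX Xu by auto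
  also have "card (?g ` X0 \<inter> ?g ` X1) \<le> 1"
  proof -
    have "y1 = y2" if y1: "y1 \<in> ?g ` X0 \<inter> ?g ` X1" and y2: "y2 \<in> ?g ` X0 \<inter> ?g ` X1" for y1 y2
    proof (rule ccontr)
      assume ne: "y1 \<noteq> y2"
      then obtain q where q: "y1 q \<noteq> y2 q" by auto
      have ex: "\<exists>v\<in>F. val v r = c \<and> y = Rs val S v"
        if "y \<in> ?g ` {w\<in>?X. w r = c}" for y c
      proof -
        from that obtain v where v: "v \<in> F" "Rs val (insert r S) v r = c"
          "y = (Rs val (insert r S) v)(r := 0)" by auto
        have "val v r = c" using v(2) unfolding Rs_def by simp
        moreover have "y = Rs val S v" using v(3) rS unfolding Rs_def by (auto simp: fun_eq_iff)
        ultimately show ?thesis using v(1) by blast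
      qed
      obtain v00 where v0: "v00 \<in> F" "val v00 r = 0" "y1 = Rs val S v00"
        using ex[of y1 0] y1 unfolding X0_def by blast
      obtain v01 where v1: "v01 \<in> F" "val v01 r = 1" "y1 = Rs val S v01"
        using ex[of y1 1] y1 unfolding X1_def by blast
      obtain v10 where w0: "v10 \<in> F" "val v10 r = 0" "y2 = Rs val S v10"
        using ex[of y2 0] y2 unfolding X0_def by blast
      obtain v11 where w1: "v11 \<in> F" "val v11 r = 1" "y2 = Rs val S v11"
        using ex[of y2 1] y2 unfolding X1_def by blast
      have qS: "q \<in> S" using q v0 w0 unfolding Rs_def by (auto split: if_splits)
      have qr: "q \<noteq> r" using qS rS by auto
      have b: "y1 q \<le> 1" "y2 q \<le> 1" using g qS v0 w0 unfolding good_def Rs_def by auto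
      have e1: "val v00 q = y1 q" using qS v0(3) unfolding Rs_def by simp
      have e2: "val v01 q = y1 q" using qS v1(3) unfolding Rs_def by simp
      have e3: "val v10 q = y2 q" using qS w0(3) unfolding Rs_def by simp
      have e4: "val v11 q = y2 q" using qS w1(3) unfolding Rs_def by simp
      note e = e1 e2 e3 e4
      have fb: "fst (forb q r) \<le> 1" "snd (forb q r) \<le> 1"
        and nf: "\<forall>v\<in>F. (val v q, val v r) \<noteq> forb q r"
        using g qS qr unfolding good_def by auto
      obtain a b' where ab: "forb q r = (a, b')" by (cases "forb q r")
      have a01: "a = y1 q \<or> a = y2 q" using fb ab b q by auto
      have b01: "b' = 0 \<or> b' = 1" using fb ab by auto
      have "\<exists>v\<in>F. val v q = a \<and> val v r = b'"
        using a01 b01 v0(1,2) v1(1,2) w0(1,2) w1(1,2) e1 e2 e3 e4 by metis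
      then show False using nf ab by auto
    qed
    moreover have "finite (?g ` X0 \<inter> ?g ` X1)" using f0 by simp
    ultimately show ?thesis using card_le_Suc0_iff_eq by (metis One_nat_def)
  qed
  finally show ?thesis by simp
qed




lemma gen_bound:
  assumes "finite F" "finite S" "good F val forb S"
  shows "card (Rs val S ` F) \<le> card S + 1"
  using assms(2,3)
proof (induction S rule: finite_induct)
  case empty
  have "Rs val {} ` F \<subseteq> {\<lambda>r. 0}" unfolding Rs_def by auto
  then have "card (Rs val {} ` F) \<le> card {\<lambda>r::nat. 0::nat}" by (intro card_mono) auto
  then show ?case by simp
next
  case (insert x S)
  have "card (Rs val (insert x S) ` F) \<le> card (Rs val S ` F) + 1"
    using step[OF assms(1) insert.prems insert.hyps(2)] .
  also have "\<dots> \<le> card S + 1 + 1" using insert.IH good_mono[OF insert.prems] by auto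
  finally show ?case using insert.hyps by simp
qed

lemma triple_vals:
  fixes x y z :: nat
  assumes "x \<le> 1" "y \<le> 1" "z \<le> 1" "(x,y) \<noteq> (0,1)" "(y,z) \<noteq> (0,1)"
  shows "(x,y,z) \<in> {(1,1,1),(1,1,0),(1,0,0),(0,0,0)}"
  using assms by (cases x; cases y; cases z) auto

lemma tri_bound:
  assumes fin: "finite F" and dist: "i \<noteq> j" "j \<noteq> k" "i \<noteq> k"
    and g: "good F val forb {i,j,k}"
    and e1: "forb i j = (0,1)" and e2: "forb j k = (0,1)" and e3: "forb i k \<noteq> (0,1)"
  shows "card (Rs val {i,j,k} ` F) \<le> 3"
proof -
  let ?X = "Rs val {i,j,k} ` F"
  let ?phi = "\<lambda>w. (w i, w j, w k)"
  obtain a b where ab: "forb i k = (a,b)" by (cases "forb i k")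
  have ab1: "a \<le> 1" "b \<le> 1" using g dist ab unfolding good_def by (metis fst_conv snd_conv insertCI)+
  define Q where "Q = {(1,1,1),(1,1,0),(1,0,0),(0,0,0)} - {t::nat\<times>nat\<times>nat. (fst t, snd (snd t)) = (a,b)}"
  have inj: "inj_on ?phi ?X"
  proof (rule inj_onI)
    fix w w' assume a: "w \<in> ?X" "w' \<in> ?X" "?phi w = ?phi w'"
    show "w = w'"
    proof
      fix x show "w x = w' x" using a unfolding Rs_def by auto
    qed
  qed
  have sub: "?phi ` ?X \<subseteq> Q"
  proof
    fix t assume "t \<in> ?phi ` ?X"
    then obtain v where v: "v \<in> F" "t = (val v i, val v j, val v k)" unfolding Rs_def by auto
    have le: "val v i \<le> 1" "val v j \<le> 1" "val v k \<le> 1" using g v(1) unfolding good_def by auto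
    have n1: "(val v i, val v j) \<noteq> (0,1)" using g v(1) dist e1 unfolding good_def by (metis insertCI)
    have n2: "(val v j, val v k) \<noteq> (0,1)" using g v(1) dist e2 unfolding good_def by (metis insertCI)
    have n3: "(val v i, val v k) \<noteq> (a,b)" using g v(1) dist ab unfolding good_def by (metis insertCI)
    show "t \<in> Q" unfolding Q_def using triple_vals[OF le n1 n2] n3 v(2) by auto
  qed
  have cQ: "card Q \<le> 3"
  proof -
    have "(a,b) = (0,0) \<or> (a,b) = (1,0) \<or> (a,b) = (1,1)" using ab1 e3 ab
      by (cases a; cases b) auto
    moreover have "(a,b) = (0,0) \<Longrightarrow> Q \<subseteq> {(1,1,1),(1,1,0),(1,0,0)}" unfolding Q_def by auto
    moreover have "(a,b) = (1,0) \<Longrightarrow> Q \<subseteq> {(1,1,1),(0,0,0),(0,0,0)}" unfolding Q_def by auto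
    moreover have "(a,b) = (1,1) \<Longrightarrow> Q \<subseteq> {(1,1,0),(1,0,0),(0,0,0)}" unfolding Q_def by auto
    ultimately have "\<exists>x y z. Q \<subseteq> {x,y,z}" by blast
    then obtain x y z where "Q \<subseteq> {x,y,z}" by blast
    then have "card Q \<le> card {x,y,z}" by (intro card_mono) auto
    also have "card {x,y,z} \<le> 3" by (simp add: card_insert_if)
    finally show ?thesis .
  qed
  have "card ?X = card (?phi ` ?X)" using inj by (simp add: card_image)
  also have "\<dots> \<le> card Q" using sub by (intro card_mono) (auto simp: Q_def)
  finally show ?thesis using cQ by simp
qed

lemma ext_bound:
  assumes fin: "finite F" and dist: "i \<noteq> j" "j \<noteq> k" "i \<noteq> k"
    and e1: "forb i j = (0,1)" and e2: "forb j k = (0,1)" and e3: "forb i k \<noteq> (0,1)"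
    and T: "finite T" "T \<inter> {i,j,k} = {}" and g: "good F val forb ({i,j,k} \<union> T)"
  shows "card (Rs val ({i,j,k} \<union> T) ` F) \<le> card T + 3"
  using T g
proof (induction T rule: finite_induct)
  case empty
  then show ?case using tri_bound[OF fin dist _ e1 e2 e3] by simp
next
  case (insert x T)
  have eq: "{i,j,k} \<union> insert x T = insert x ({i,j,k} \<union> T)" by auto
  have xn: "x \<notin> {i,j,k} \<union> T" using insert by auto
  have "card (Rs val ({i,j,k} \<union> insert x T) ` F) \<le> card (Rs val ({i,j,k} \<union> T) ` F) + 1"
    unfolding eq using step[OF fin _ xn] insert.prems(2) eq by metis
  also have "\<dots> \<le> card T + 3 + 1"
  proof -
    have "good F val forb ({i,j,k} \<union> T)" using good_mono[OF insert.prems(2)] by auto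
    moreover have "T \<inter> {i,j,k} = {}" using insert.prems(1) by auto
    ultimately show ?thesis using insert.IH by simp
  qed
  finally show ?case using insert.hyps by simp
qed




lemma card_sup_pow:
  assumes "finite A" "K \<subseteq> A"
  shows "card {S \<in> Pow A. K \<subseteq> S} = 2 ^ (card A - card K)"
proof -
  have "bij_betw (\<lambda>S. S \<union> K) (Pow (A - K)) {S \<in> Pow A. K \<subseteq> S}"
  proof (rule bij_betw_byWitness[where f' = "\<lambda>S. S - K"])
    show "\<forall>a\<in>Pow (A - K). a \<union> K - K = a" by auto
    show "\<forall>a'\<in>{S \<in> Pow A. K \<subseteq> S}. a' - K \<union> K = a'" by auto
    show "(\<lambda>S. S \<union> K) ` Pow (A - K) \<subseteq> {S \<in> Pow A. K \<subseteq> S}" using assms by auto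
    show "(\<lambda>S. S - K) ` {S \<in> Pow A. K \<subseteq> S} \<subseteq> Pow (A - K)" by auto
  qed
  then have "card {S \<in> Pow A. K \<subseteq> S} = card (Pow (A - K))" by (simp add: bij_betw_same_card)
  also have "\<dots> = 2 ^ card (A - K)" using assms by (simp add: card_Pow)
  also have "card (A - K) = card A - card K" using assms by (meson card_Diff_subset finite_subset)
  finally show ?thesis .
qed

lemma ind_sum: "finite X \<Longrightarrow> (\<Sum>x\<in>X. if P x then 1 else (0::nat)) = card {x\<in>X. P x}"
  by (simp add: sum.If_cases Int_def conj_commute)

lemma sum_card_pow:
  assumes "finite A"
  shows "(\<Sum>S\<in>Pow A. card S) = card A * 2 ^ (card A - 1)"
proof -
  have "(\<Sum>S\<in>Pow A. card S) = (\<Sum>S\<in>Pow A. \<Sum>r\<in>A. if r \<in> S then 1 else (0::nat))"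
  proof (rule sum.cong)
    fix S assume "S \<in> Pow A"
    then have "{r\<in>A. r \<in> S} = S" by auto
    then show "card S = (\<Sum>r\<in>A. if r \<in> S then 1 else (0::nat))" using ind_sum[OF assms, of "\<lambda>r. r \<in> S"] by simp
  qed simp
  also have "\<dots> = (\<Sum>r\<in>A. \<Sum>S\<in>Pow A. if r \<in> S then 1 else (0::nat))" by (rule sum.swap)
  also have "\<dots> = (\<Sum>r\<in>A. 2 ^ (card A - 1))"
  proof (rule sum.cong)
    fix r assume r: "r \<in> A"
    have "(\<Sum>S\<in>Pow A. if r \<in> S then 1 else (0::nat)) = card {S\<in>Pow A. r \<in> S}"
      using ind_sum[of "Pow A" "\<lambda>S. r \<in> S"] assms by simp
    also have "{S\<in>Pow A. r \<in> S} = {S\<in>Pow A. {r} \<subseteq> S}" by auto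
    also have "card \<dots> = 2 ^ (card A - 1)" using card_sup_pow[OF assms, of "{r}"] r by simp
    finally show "(\<Sum>S\<in>Pow A. if r \<in> S then 1 else (0::nat)) = 2 ^ (card A - 1)" .
  qed simp
  finally show ?thesis by simp
qed




theorem mainTheorem7:
  fixes p a d m :: nat and A :: "nat list set" and assoc :: "nat \<Rightarrow> nat \<Rightarrow> nat \<times> nat"
  assumes "p \<ge> 3" and "a \<le> p - 1" and "d \<le> p - 1" and "m \<ge> 3"
    and "simple012 m A"
    and "\<not> config 2 (Fmat a p p d) m A"
    and "assoc_vectors a p d m A assoc"
    and "int (card (unmarked m A assoc)) > 2 ^ m + int m * 2 ^ (m - 1) - 2 ^ (m - 3)"
  shows "\<forall>i j k. i \<noteq> j \<and> j \<noteq> k \<and> i \<noteq> k \<and> T_edge m assoc i j \<and> T_edge m assoc j k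
           \<longrightarrow> T_edge m assoc i k"
proof (intro allI impI, elim conjE, rule ccontr)
  fix i j k
  assume ij: "i \<noteq> j" and jk: "j \<noteq> k" and ik: "i \<noteq> k"
    and Tij: "T_edge m assoc i j" and Tjk: "T_edge m assoc j k" and nTik: "\<not> T_edge m assoc i k"
  define forb where "forb = (\<lambda>q r. if q < r then assoc q r else prod.swap (assoc r q))"
  define val where "val = (\<lambda>(v::nat list) r. v ! r)"
  define B where "B = unmarked m A assoc"
  define C where "C = (\<lambda>S. {v\<in>B. {r. r < m \<and> v ! r \<noteq> 2} = S})"
  define P where "P = Pow {..<m}"
  define K where "K = {i,j,k}"
  have finA: "finite A" using assms(5) unfolding simple012_def col_matrix_def by auto
  have colA: "\<And>v. v \<in> A \<Longrightarrow> length v = m \<and> set v \<subseteq> {0,1,2}"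
    using assms(5) unfolding simple012_def col_matrix_def by auto
  have BA: "B \<subseteq> A" unfolding B_def unmarked_def by auto
  have finB: "finite B" using BA finA finite_subset by blast
  have av: "\<And>q r. q < r \<Longrightarrow> r < m \<Longrightarrow> assoc q r \<in> {(0,0),(0,1),(1,0),(1,1)}"
    using assms(7) unfolding assoc_vectors_def by blast
  have um: "\<And>v q r. v \<in> B \<Longrightarrow> q < r \<Longrightarrow> r < m \<Longrightarrow> (v ! q, v ! r) \<noteq> assoc q r"
    unfolding B_def unmarked_def by blast
  have im: "i < m" "j < m" "k < m" using Tij Tjk unfolding T_edge_def by auto
  have e1: "forb i j = (0,1)" using Tij ij unfolding T_edge_def forb_def by auto
  have e2: "forb j k = (0,1)" using Tjk jk unfolding T_edge_def forb_def by auto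
  have e3: "forb i k \<noteq> (0,1)"
  proof
    assume h: "forb i k = (0,1)"
    show False
    proof (cases "i < k")
      case True then show False using h nTik im unfolding T_edge_def forb_def by auto
    next
      case False then have "k < i" using ik by auto
      then show False using h nTik im unfolding T_edge_def forb_def by (auto simp: prod.swap_def prod_eq_iff)
    qed
  qed
  have good: "good (C S) val forb S" if S: "S \<in> P" for S
  proof -
    have Sm: "S \<subseteq> {..<m}" using S unfolding P_def by auto
    have "\<forall>v\<in>C S. \<forall>r\<in>S. val v r \<le> 1"
    proof (intro ballI)
      fix v r assume v: "v \<in> C S" and r: "r \<in> S"
      have vB: "v \<in> B" and vS: "{r. r < m \<and> v ! r \<noteq> 2} = S" using v unfolding C_def by auto
      have "r < m" "v ! r \<noteq> 2" using r vS by auto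
      moreover have "v ! r \<in> {0,1,2}" using colA[of v] vB BA \<open>r < m\<close> nth_mem by blast
      ultimately show "val v r \<le> 1" unfolding val_def by auto
    qed
    moreover have "\<forall>q\<in>S. \<forall>r\<in>S. q \<noteq> r \<longrightarrow> fst (forb q r) \<le> 1 \<and> snd (forb q r) \<le> 1 \<and>
        (\<forall>v\<in>C S. (val v q, val v r) \<noteq> forb q r)"
    proof (intro ballI impI)
      fix q r assume q: "q \<in> S" and r: "r \<in> S" and qr: "q \<noteq> r"
      have qm: "q < m" "r < m" using q r Sm by auto
      show "fst (forb q r) \<le> 1 \<and> snd (forb q r) \<le> 1 \<and> (\<forall>v\<in>C S. (val v q, val v r) \<noteq> forb q r)"
      proof (cases "q < r")
        case True
        then show ?thesis using av[OF True qm(2)] um[OF _ True qm(2)]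
          unfolding forb_def val_def C_def by auto
      next
        case False then have rq: "r < q" using qr by auto
        obtain x y where xy: "assoc r q = (x,y)" by (cases "assoc r q")
        have fq: "forb q r = (y,x)" using rq xy unfolding forb_def by simp
        have a1: "x \<le> 1" "y \<le> 1" using av[OF rq qm(1)] xy by auto
        have a2: "\<forall>v\<in>C S. (v ! r, v ! q) \<noteq> (x,y)" using um[OF _ rq qm(1)] xy unfolding C_def by auto
        show ?thesis using fq a1 a2 unfolding val_def by auto
      qed
    qed
    ultimately show ?thesis unfolding good_def by blast
  qed
  have injR: "card (C S) = card (Rs val S ` C S)" for S
  proof -
    have "inj_on (Rs val S) (C S)"
    proof (rule inj_onI)
      fix v w assume v: "v \<in> C S" and w: "w \<in> C S" and eq: "Rs val S v = Rs val S w"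
      have vB: "v \<in> B" and vS: "{r. r < m \<and> v ! r \<noteq> 2} = S" using v unfolding C_def by auto
      have wB: "w \<in> B" and wS: "{r. r < m \<and> w ! r \<noteq> 2} = S" using w unfolding C_def by auto
      have lv: "length v = m" "length w = m" using colA vB wB BA by auto
      show "v = w"
      proof (rule nth_equalityI)
        show "length v = length w" using lv by simp
        fix r assume "r < length v"
        then have r: "r < m" using lv by simp
        show "v ! r = w ! r"
        proof (cases "r \<in> S")
          case True then show ?thesis using fun_cong[OF eq, of r] unfolding Rs_def val_def by simp
        next
          case False
          have "r \<notin> {r. r < m \<and> v ! r \<noteq> 2}" using False vS by simp
          moreover have "r \<notin> {r. r < m \<and> w ! r \<noteq> 2}" using False wS by simp
          ultimately show ?thesis using r by simp
        qed
      qed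
    qed
    then show ?thesis by (simp add: card_image)
  qed
  have finC: "finite (C S)" for S using finB unfolding C_def by auto
  define h where "h = (\<lambda>S. if K \<subseteq> S then card S else card S + 1)"
  have bnd: "card (C S) \<le> h S" if S: "S \<in> P" for S
  proof (cases "K \<subseteq> S")
    case False
    have "finite S" using S unfolding P_def by (auto intro: finite_subset)
    then show ?thesis using gen_bound[OF finC _ good[OF S]] False injR unfolding h_def by simp
  next
    case True
    have finS: "finite S" using S unfolding P_def by (auto intro: finite_subset)
    have SK: "S = {i,j,k} \<union> (S - K)" using True unfolding K_def by auto
    have "card (Rs val ({i,j,k} \<union> (S - K)) ` C S) \<le> card (S - K) + 3"
      by (rule ext_bound[OF finC ij jk ik e1 e2 e3]) (use finS good[OF S] SK K_def in auto)
    moreover have "card (S - K) = card S - 3" using True finS ij jk ik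
      by (simp add: card_Diff_subset K_def finite_subset)
    moreover have "card S \<ge> 3" using True finS ij jk ik card_mono[OF finS True] unfolding K_def by simp
    ultimately show ?thesis using injR SK True unfolding h_def by simp
  qed
  have BU: "B \<subseteq> (\<Union>S\<in>P. C S)"
  proof
    fix v assume v: "v \<in> B"
    show "v \<in> (\<Union>S\<in>P. C S)" using v unfolding P_def C_def by auto
  qed
  have finP: "finite P" unfolding P_def by simp
  have "card B \<le> card (\<Union>S\<in>P. C S)" using BU finP finC by (intro card_mono) auto
  also have "\<dots> \<le> (\<Sum>S\<in>P. card (C S))" using finP by (rule card_UN_le)
  also have "\<dots> \<le> (\<Sum>S\<in>P. h S)" using bnd by (rule sum_mono)
  finally have cB: "card B \<le> (\<Sum>S\<in>P. h S)" .
  have "(\<Sum>S\<in>P. h S) + (\<Sum>S\<in>P. if K \<subseteq> S then 1 else 0) = (\<Sum>S\<in>P. card S) + (\<Sum>S\<in>P. 1)"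
    unfolding sum.distrib[symmetric] h_def by (rule sum.cong) auto
  moreover have "(\<Sum>S\<in>P. if K \<subseteq> S then 1 else (0::nat)) = 2 ^ (m - 3)"
  proof -
    have "(\<Sum>S\<in>P. if K \<subseteq> S then 1 else (0::nat)) = card {S\<in>P. K \<subseteq> S}" using ind_sum finP by blast
    also have "\<dots> = 2 ^ (card {..<m} - card K)" unfolding P_def
      by (rule card_sup_pow) (use im K_def in auto)
    finally show ?thesis using ij jk ik unfolding K_def by simp
  qed
  moreover have "(\<Sum>S\<in>P. card S) = m * 2 ^ (m - 1)" unfolding P_def using sum_card_pow[of "{..<m}"] by simp
  moreover have "(\<Sum>S\<in>P. 1::nat) = 2 ^ m" unfolding P_def by (simp add: card_Pow)
  ultimately have "card B + 2 ^ (m - 3) \<le> m * 2 ^ (m - 1) + 2 ^ m" using cB by linarith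
  then have "int (card B) + 2 ^ (m - 3) \<le> int m * 2 ^ (m - 1) + 2 ^ m"
    by (metis (mono_tags) of_nat_add of_nat_le_iff of_nat_mult of_nat_numeral of_nat_power)
  then show False using assms(8) unfolding B_def by linarith
qed


end
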